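(* Assume $\gamma\neq\pm2$, $p_1,\dots,p_N>0$ and $q_1,\dots,q_N$ pairwise distinct. For each integer $m\ge1$ let $\tau_m(z)=\mathrm{tr}\big(\mathcal L(z)^m\big)$. Then there is a polynomial $P_m(X)$ of degree $m$ in one variable $X$, whose coefficients are functions of $(p,q)$ and which has no constant term, such that $\tau_m(z)=P_m(\Lambda(z))$ for all $z\neq-\gamma/2$. The coefficient of $X$ in $P_m$ is $$\mathfrak h^{(m)}=m\,\mathrm{tr}\Big(\big(T+\tfrac{\gamma}{2}A\big)\,(S+A)^{m-1}\Big).$$ Moreover $\tau_m(z)$ is a homogeneous symmetric function of $p_1,\dots,p_N$ of degree $m$.
   Context: Fix $N\ge2$, $\nu\neq0$ and a constant $\gamma$. The variables are $p_1,\dots,p_N$ and $q_1,\dots,q_N$. Write $q_{ij}=q_i-q_j$ and $\mathfrak s_{ij}=\mathrm{sgn}(q_i-q_j)$, with the convention $\mathfrak s_{ii}=0$. $E_{ij}$ denotes the elementary $N\times N$ matrix. Define the $N\times N$ matrices $A=\sum_{i,j}\sqrt{p_ip_j}\,\sinh\frac{\nu}{2}(q_i-q_j)\,E_{ij}$, $T=\sum_{i,j}\sqrt{p_ip_j}\,\cosh\frac{\nu}{2}(q_i-q_j)\,E_{ij}$ and $S=\sum_{i,j}\sqrt{p_ip_j}\,\mathfrak s_{ij}\sinh\frac{\nu}{2}(q_i-q_j)\,E_{ij}$. Let $\sigma(z)=z^\sigma=-\frac{\frac{\gamma}{2}z+1}{z+\frac{\gamma}{2}}$, $\Lambda(z)=\frac{z+z^\sigma}{2}=\frac{z^2-1}{2z+\gamma}$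 and $\xi(z)=\frac{z-z^\sigma}{2}=\frac{z^2+\gamma z+1}{2z+\gamma}$. The Lax matrix is $\mathcal L(z)=\Lambda(z)\,T+S+\xi(z)\,A$; equivalently $\mathcal L(z)=z\,T^h+z^\sigma (T^h)^t+S$ with $T^h=\frac12\sum_{i,j}\sqrt{p_ip_j}\,e^{\frac{\nu}{2}(q_i-q_j)}E_{ij}$. *)

theory Defs
  imports "HOL-Analysis.Analysis" "HOL-Computational_Algebra.Polynomial"
begin

text \<open>Particle index set: a finite type 'n with CARD('n) = N.
  Momenta p and positions q are vectors in real^'n; matrices are real^'n^'n.\<close>

definition Amat :: "real \<Rightarrow> real^'n \<Rightarrow> real^'n \<Rightarrow> real^'n^'n" where
  "Amat \<nu> p q = (\<chi> i j. sqrt (p$i * p$j) * sinh (\<nu>/2 * (q$i - q$j)))"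

definition Tmat :: "real \<Rightarrow> real^'n \<Rightarrow> real^'n \<Rightarrow> real^'n^'n" where
  "Tmat \<nu> p q = (\<chi> i j. sqrt (p$i * p$j) * cosh (\<nu>/2 * (q$i - q$j)))"

text \<open>sgn 0 = 0 gives the convention s_ii = 0.\<close>
definition Smat :: "real \<Rightarrow> real^'n \<Rightarrow> real^'n \<Rightarrow> real^'n^'n" where
  "Smat \<nu> p q = (\<chi> i j. sqrt (p$i * p$j) * sgn (q$i - q$j) * sinh (\<nu>/2 * (q$i - q$j)))"

definition Lam :: "real \<Rightarrow> real \<Rightarrow> real" where
  "Lam \<gamma> z = (z^2 - 1) / (2*z + \<gamma>)"

definition Xi :: "real \<Rightarrow> real \<Rightarrow> real" where
  "Xi \<gamma> z = (z^2 + \<gamma>*z + 1) / (2*z + \<gamma>)"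

definition Lax :: "real \<Rightarrow> real \<Rightarrow> real^'n \<Rightarrow> real^'n \<Rightarrow> real \<Rightarrow> real^'n^'n" where
  "Lax \<nu> \<gamma> p q z = Lam \<gamma> z *\<^sub>R Tmat \<nu> p q + Smat \<nu> p q + Xi \<gamma> z *\<^sub>R Amat \<nu> p q"

fun matpow :: "real^'n^'n \<Rightarrow> nat \<Rightarrow> real^'n^'n" where
  "matpow M 0 = mat 1"
| "matpow M (Suc k) = M ** matpow M k"

definition tau :: "real \<Rightarrow> real \<Rightarrow> real^'n \<Rightarrow> real^'n \<Rightarrow> nat \<Rightarrow> real \<Rightarrow> real" where
  "tau \<nu> \<gamma> p q m z = trace (matpow (Lax \<nu> \<gamma> p q z) m)"

end

theory Submission imports Defs begin

fun fab :: "real \<Rightarrow> real^'n::finite^'n \<Rightarrow> real^'n^'n \<Rightarrow> real^'n^'n \<Rightarrow> nat \<Rightarrow> 'n \<Rightarrow> 'n \<Rightarrow> real poly \<times> real poly" where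
  "fab g Tm Sm Am 0 = (\<lambda>i j. (if i = j then 1 else 0, 0))"
| "fab g Tm Sm Am (Suc k) = (\<lambda>i j.
     ((\<Sum>l\<in>UNIV. smult (Sm$i$l) (fst (fab g Tm Sm Am k l j))
        + smult (Tm$i$l) (pCons 0 (fst (fab g Tm Sm Am k l j)))
        + smult (Am$i$l) (snd (fab g Tm Sm Am k l j) + smult g (pCons 0 (snd (fab g Tm Sm Am k l j)))
             + pCons 0 (pCons 0 (snd (fab g Tm Sm Am k l j))))),
      (\<Sum>l\<in>UNIV. smult (Sm$i$l) (snd (fab g Tm Sm Am k l j))
        + smult (Tm$i$l) (pCons 0 (snd (fab g Tm Sm Am k l j)))
        + smult (Am$i$l) (fst (fab g Tm Sm Am k l j)))))"

lemma termw:
  fixes x g \<xi> t s a fa fb :: real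
  assumes "\<xi>^2 = x^2 + g*x + 1"
  shows "(x * t + s + \<xi> * a) * (fa + \<xi> * fb) =
    s * fa + t * (0 + x * fa) + a * (fb + g * (0 + x * fb) + (0 + x * (0 + x * fb)))
    + \<xi> * (s * fb + t * (0 + x * fb) + a * fa)"
  using assms by algebra

lemma fab_eval:
  fixes Tm Sm Am :: "real^'n::finite^'n"
  assumes "\<xi>^2 = x^2 + g*x + 1"
  shows "matpow (x *\<^sub>R Tm + Sm + \<xi> *\<^sub>R Am) k $ i $ j
     = poly (fst (fab g Tm Sm Am k i j)) x + \<xi> * poly (snd (fab g Tm Sm Am k i j)) x"
proof (induction k arbitrary: i j)
  case 0
  then show ?case by (simp add: mat_def)
next
  case (Suc k)
  have "matpow (x *\<^sub>R Tm + Sm + \<xi> *\<^sub>R Am) (Suc k) $ i $ j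
     = (\<Sum>l\<in>UNIV. (x * Tm$i$l + Sm$i$l + \<xi> * Am$i$l) *
          (poly (fst (fab g Tm Sm Am k l j)) x + \<xi> * poly (snd (fab g Tm Sm Am k l j)) x))"
    by (simp add: matrix_matrix_mult_def Suc.IH)
  also have "\<dots> = poly (fst (fab g Tm Sm Am (Suc k) i j)) x + \<xi> * poly (snd (fab g Tm Sm Am (Suc k) i j)) x"
    unfolding fab.simps poly_sum fst_conv snd_conv sum_distrib_left sum.distrib[symmetric]
    by (rule sum.cong[OF refl], simp only: poly_add poly_smult poly_pCons, rule termw[OF assms])
  finally show ?case .
qed

lemma fab_c0:
  fixes Tm Sm Am :: "real^'n::finite^'n"
  shows "coeff (fst (fab g Tm Sm Am k i j)) 0 + coeff (snd (fab g Tm Sm Am k i j)) 0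
     = matpow (Sm + Am) k $ i $ j"
  using fab_eval[of 1 0 g Tm Sm Am k i j] by (simp add: poly_0_coeff_0)

fun U1 :: "real^'n::finite^'n \<Rightarrow> real^'n^'n \<Rightarrow> nat \<Rightarrow> real^'n^'n" where
  "U1 X Y 0 = 0"
| "U1 X Y (Suc k) = X ** U1 X Y k + Y ** matpow X k"

lemma fab_c1:
  fixes Tm Sm Am :: "real^'n::finite^'n"
  shows "coeff (fst (fab g Tm Sm Am k i j)) (Suc 0) + coeff (snd (fab g Tm Sm Am k i j)) (Suc 0)
     + g/2 * coeff (snd (fab g Tm Sm Am k i j)) 0
     = U1 (Sm + Am) (Tm + (g/2) *\<^sub>R Am) k $ i $ j"
proof (induction k arbitrary: i j)
  case 0
  then show ?case by simp
next
  case (Suc k)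
  let ?a1 = "\<lambda>l. coeff (fst (fab g Tm Sm Am k l j)) (Suc 0)"
  let ?b1 = "\<lambda>l. coeff (snd (fab g Tm Sm Am k l j)) (Suc 0)"
  let ?a0 = "\<lambda>l. coeff (fst (fab g Tm Sm Am k l j)) 0"
  let ?b0 = "\<lambda>l. coeff (snd (fab g Tm Sm Am k l j)) 0"
  have "U1 (Sm + Am) (Tm + (g/2) *\<^sub>R Am) (Suc k) $ i $ j
    = (\<Sum>l\<in>UNIV. (Sm$i$l + Am$i$l) * (?a1 l + ?b1 l + g/2 * ?b0 l)
         + (Tm$i$l + g/2 * Am$i$l) * (?a0 l + ?b0 l))"
    by (simp add: matrix_matrix_mult_def Suc.IH[symmetric] fab_c0 sum.distrib)
  also have "\<dots> = coeff (fst (fab g Tm Sm Am (Suc k) i j)) (Suc 0) + coeff (snd (fab g Tm Sm Am (Suc k) i j)) (Suc 0)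
     + g/2 * coeff (snd (fab g Tm Sm Am (Suc k) i j)) 0"
    unfolding fab.simps fst_conv snd_conv coeff_sum sum_distrib_left sum.distrib[symmetric]
    by (rule sum.cong[OF refl], simp add: field_simps)
  finally show ?case by simp
qed

lemma pCons0_smult: "pCons 0 (smult c p) = smult c (pCons 0 p)"
  by simp

lemma fab_deg:
  fixes Tm Sm Am :: "real^'n::finite^'n"
  shows "(\<forall>n>k. coeff (fst (fab g Tm Sm Am k i j)) n = 0)
    \<and> (\<forall>n\<ge>k. coeff (snd (fab g Tm Sm Am k i j)) n = 0)
    \<and> coeff (fst (fab g Tm Sm Am k i j)) k + coeff (pCons 0 (snd (fab g Tm Sm Am k i j))) k
        = matpow (Tm + Am) k $ i $ j"
proof (induction k arbitrary: i j)
  case 0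
  then show ?case by (simp add: mat_def coeff_1)
next
  case (Suc k)
  have A1: "coeff (fst (fab g Tm Sm Am k l j)) n = 0" if "n > k" for l n
    using Suc.IH that by blast
  have A2: "coeff (snd (fab g Tm Sm Am k l j)) n = 0" if "n \<ge> k" for l n
    using Suc.IH that by blast
  have A3: "coeff (fst (fab g Tm Sm Am k l j)) k + coeff (pCons 0 (snd (fab g Tm Sm Am k l j))) k
        = matpow (Tm + Am) k $ l $ j" for l
    using Suc.IH by blast
  have B1: "\<forall>n>Suc k. coeff (fst (fab g Tm Sm Am (Suc k) i j)) n = 0"
  proof (intro allI impI)
    fix n assume "n > Suc k"
    then obtain m where m: "n = Suc (Suc m)" "m \<ge> k" by (intro that[of "n-2"]) auto
    show "coeff (fst (fab g Tm Sm Am (Suc k) i j)) n = 0"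
      unfolding fab.simps fst_conv snd_conv coeff_sum m(1)
      using m(2) by (simp add: A1 A2)
  qed
  have B2: "\<forall>n\<ge>Suc k. coeff (snd (fab g Tm Sm Am (Suc k) i j)) n = 0"
  proof (intro allI impI)
    fix n assume "n \<ge> Suc k"
    then obtain m where m: "n = Suc m" "m \<ge> k" by (intro that[of "n-1"]) auto
    show "coeff (snd (fab g Tm Sm Am (Suc k) i j)) n = 0"
      unfolding fab.simps fst_conv snd_conv coeff_sum m(1)
      using m(2) by (simp add: A1 A2)
  qed
  have "matpow (Tm + Am) (Suc k) $ i $ j = (\<Sum>l\<in>UNIV. (Tm$i$l + Am$i$l) *
      (coeff (fst (fab g Tm Sm Am k l j)) k + coeff (pCons 0 (snd (fab g Tm Sm Am k l j))) k))"
    by (simp only: A3) (simp add: matrix_matrix_mult_def)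
  also have "\<dots> = coeff (fst (fab g Tm Sm Am (Suc k) i j)) (Suc k) + coeff (pCons 0 (snd (fab g Tm Sm Am (Suc k) i j))) (Suc k)"
    unfolding fab.simps fst_conv snd_conv coeff_sum coeff_pCons_Suc sum.distrib[symmetric]
    by (rule sum.cong[OF refl], simp add: A1 A2 distrib_left distrib_right pCons0_smult del: smult_pCons)
  finally show ?case using B1 B2 by simp
qed

lemma matpow_Suc': "matpow M (Suc k) = matpow M k ** M"
  by (induction k) (simp_all add: matrix_mul_assoc)

lemma matpow_add: "matpow M (a + b) = matpow M a ** matpow M b"
  by (induction a) (simp_all add: matrix_mul_assoc)

lemma matpow_transpose: "matpow (transpose M) k = transpose (matpow M k)"
proof (induction k)
  case 0
  then show ?case by (simp add: transpose_mat)
next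
  case (Suc k)
  have "matpow (transpose M) (Suc k) = transpose M ** transpose (matpow M k)"
    using Suc.IH by simp
  also have "\<dots> = transpose (matpow M k ** M)" by (simp add: matrix_transpose_mul)
  also have "\<dots> = transpose (matpow M (Suc k))" by (simp only: matpow_Suc')
  finally show ?case .
qed

lemma trace_transpose: "trace (transpose (M::real^'n::finite^'n)) = trace M"
  by (simp add: trace_def transpose_def)

lemma matpow_scaleR: "matpow (c *\<^sub>R M) k = c ^ k *\<^sub>R matpow M k"
  by (induction k) (simp_all add: scalar_matrix_assoc[symmetric] matrix_scalar_ac)

lemma trace_scaleR: "trace (c *\<^sub>R (M::real^'n::finite^'n)) = c * trace M"
  by (simp add: trace_def sum_distrib_left)

lemma nilp_entry:
  fixes M :: "real^'n::finite^'n" and f :: "'n \<Rightarrow> real"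
  assumes "\<And>i j. M$i$j \<noteq> 0 \<Longrightarrow> f j < f i"
  shows "matpow M (Suc k) $ i $ j \<noteq> 0 \<Longrightarrow> f j < f i"
proof (induction k arbitrary: i j)
  case 0
  then show ?case using assms by simp
next
  case (Suc k)
  from Suc.prems have "(\<Sum>l\<in>UNIV. M$i$l * matpow M (Suc k) $ l $ j) \<noteq> 0"
    by (simp add: matrix_matrix_mult_def)
  then obtain l where "M$i$l * matpow M (Suc k) $ l $ j \<noteq> 0"
    by (meson sum.not_neutral_contains_not_neutral)
  then have "f l < f i" "f j < f l" using assms Suc.IH by auto
  then show ?case by simp
qed

lemma nilp_trace:
  fixes M :: "real^'n::finite^'n" and f :: "'n \<Rightarrow> real"
  assumes "\<And>i j. M$i$j \<noteq> 0 \<Longrightarrow> f j < f i"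
  shows "trace (matpow M (Suc k)) = 0"
  unfolding trace_def using nilp_entry[OF assms, where k=k] by (meson less_irrefl sum.neutral)

lemma rank1_entry:
  fixes M :: "real^'n::finite^'n"
  assumes "\<And>i j. M$i$j = u i * v j"
  shows "matpow M (Suc k) $ i $ j = (\<Sum>l\<in>UNIV. v l * u l) ^ k * u i * v j"
proof (induction k arbitrary: i j)
  case 0
  then show ?case using assms by simp
next
  case (Suc k)
  have "matpow M (Suc (Suc k)) $ i $ j = (\<Sum>l\<in>UNIV. u i * v l * ((\<Sum>l\<in>UNIV. v l * u l) ^ k * u l * v j))"
    unfolding matpow.simps(2)[of M "Suc k"] matrix_matrix_mult_def
    by (simp add: Suc.IH assms del: matpow.simps)
  also have "\<dots> = (\<Sum>l\<in>UNIV. v l * u l) ^ k * u i * v j * (\<Sum>l\<in>UNIV. v l * u l)"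
    by (simp add: sum_distrib_left sum_distrib_right mult_ac)
  finally show ?case by (simp add: mult_ac)
qed

lemma rank1_trace:
  fixes M :: "real^'n::finite^'n"
  assumes "\<And>i j. M$i$j = u i * v j"
  shows "trace (matpow M (Suc k)) = (\<Sum>l\<in>UNIV. v l * u l) ^ Suc k"
proof -
  have "trace (matpow M (Suc k)) = (\<Sum>i\<in>UNIV. (v i * u i) * (\<Sum>l\<in>UNIV. v l * u l) ^ k)"
    unfolding trace_def rank1_entry[OF assms] by (simp add: mult_ac)
  also have "\<dots> = (\<Sum>l\<in>UNIV. v l * u l) ^ Suc k"
    by (simp add: sum_distrib_right[symmetric])
  finally show ?thesis .
qed

lemma perm_entry:
  fixes M M' :: "real^'n::finite^'n"
  assumes "\<sigma> permutes UNIV" "\<And>i j. M'$i$j = M$(\<sigma> i)$(\<sigma> j)"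
  shows "matpow M' k $ i $ j = matpow M k $ (\<sigma> i) $ (\<sigma> j)"
proof (induction k arbitrary: i j)
  case 0
  then show ?case using permutes_inj[OF assms(1)] by (simp add: mat_def inj_eq)
next
  case (Suc k)
  have "matpow M' (Suc k) $ i $ j = (\<Sum>l\<in>UNIV. M$(\<sigma> i)$(\<sigma> l) * matpow M k $ (\<sigma> l) $ (\<sigma> j))"
    by (simp add: matrix_matrix_mult_def Suc.IH assms(2))
  also have "\<dots> = (\<Sum>l\<in>UNIV. M$(\<sigma> i)$l * matpow M k $ l $ (\<sigma> j))"
    using sum.permute[OF assms(1), of "\<lambda>l. M$(\<sigma> i)$l * matpow M k $ l $ (\<sigma> j)"]
    by (simp add: comp_def)
  finally show ?case by (simp add: matrix_matrix_mult_def)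
qed

lemma perm_trace:
  fixes M M' :: "real^'n::finite^'n"
  assumes "\<sigma> permutes UNIV" "\<And>i j. M'$i$j = M$(\<sigma> i)$(\<sigma> j)"
  shows "trace (matpow M' k) = trace (matpow M k)"
  unfolding trace_def perm_entry[OF assms]
  using sum.permute[OF assms(1), of "\<lambda>l. matpow M k $ l $ l"] by (simp add: comp_def)

lemma U1_trace:
  fixes X Y :: "real^'n::finite^'n"
  shows "trace (matpow X r ** U1 X Y k) = real k * trace (Y ** matpow X (k + r - 1))"
proof (induction k arbitrary: r)
  case 0
  then show ?case by (simp add: trace_def)
next
  case (Suc k)
  have "trace (matpow X r ** U1 X Y (Suc k)) = trace (matpow X (Suc r) ** U1 X Y k)
      + trace (matpow X r ** (Y ** matpow X k))"
    by (simp add: matrix_add_ldistrib trace_add matrix_mul_assoc matpow_Suc'[symmetric] del: matpow.simps)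
  also have "trace (matpow X r ** (Y ** matpow X k)) = trace (Y ** matpow X (k + r))"
    by (metis matpow_add matrix_mul_assoc trace_mul_sym)
  finally show ?case using Suc.IH[of "Suc r"] by (simp add: algebra_simps)
qed

lemma aux_frac:
  fixes N M d g :: real
  assumes "N^2 = M^2 + g*M*d + d^2" "d \<noteq> 0"
  shows "(N/d)^2 = (M/d)^2 + g*(M/d) + 1"
  using assms by (simp add: field_simps power2_eq_square)

lemma Xi_sq:
  assumes "z \<noteq> -\<gamma>/2"
  shows "(Xi \<gamma> z)^2 = (Lam \<gamma> z)^2 + \<gamma> * Lam \<gamma> z + 1"
proof -
  have h: "2*z + \<gamma> \<noteq> 0" using assms by (auto simp: field_simps)
  have "(z^2 + \<gamma>*z + 1)^2 = (z^2 - 1)^2 + \<gamma> * (z^2-1) * (2*z+\<gamma>) + (2*z+\<gamma>)^2"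
    by algebra
  then show ?thesis unfolding Xi_def Lam_def using h
    by (intro aux_frac)
qed
lemma e1: "(\<nu>::real)/2*(a - b) = -(\<nu>/2*(b-a))" by (simp add: field_simps)
lemma T_sym: "Tmat \<nu> p q $ j $ i = Tmat \<nu> p q $ i $ j"
  unfolding Tmat_def by (simp only: vec_lambda_beta e1[of \<nu> "q$j"] cosh_minus mult.commute[of "p$j"])
lemma S_sym: "Smat \<nu> p q $ j $ i = Smat \<nu> p q $ i $ j"
proof -
  have e2: "q$j - q$i = -(q$i-q$j)" by simp
  show ?thesis unfolding Smat_def
    by (simp only: vec_lambda_beta e1[of \<nu> "q$j"] e2 sinh_minus sgn_minus mult.commute[of "p$j"] mult_minus_left mult_minus_right minus_minus)
qed
lemma A_anti: "Amat \<nu> p q $ j $ i = - Amat \<nu> p q $ i $ j"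
  unfolding Amat_def by (simp only: vec_lambda_beta e1[of \<nu> "q$j"] sinh_minus mult.commute[of "p$j"] mult_minus_right)

lemma L_transpose:
  "transpose (x *\<^sub>R Tmat \<nu> p q + Smat \<nu> p q + \<xi> *\<^sub>R Amat \<nu> p q)
    = x *\<^sub>R Tmat \<nu> p q + Smat \<nu> p q + (-\<xi>) *\<^sub>R Amat \<nu> p q"
proof -
  have "\<And>i j. transpose (x *\<^sub>R Tmat \<nu> p q + Smat \<nu> p q + \<xi> *\<^sub>R Amat \<nu> p q) $ i $ j
     = (x *\<^sub>R Tmat \<nu> p q + Smat \<nu> p q + (-\<xi>) *\<^sub>R Amat \<nu> p q) $ i $ j"
  proof -
    fix i j
    have "transpose (x *\<^sub>R Tmat \<nu> p q + Smat \<nu> p q + \<xi> *\<^sub>R Amat \<nu> p q) $ i $ j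
      = x * Tmat \<nu> p q $ j $ i + Smat \<nu> p q $ j $ i + \<xi> * Amat \<nu> p q $ j $ i"
      by (simp add: transpose_def)
    also have "\<dots> = x * Tmat \<nu> p q $ i $ j + Smat \<nu> p q $ i $ j + (-\<xi>) * Amat \<nu> p q $ i $ j"
      by (simp only: T_sym[of \<nu> p q j i] S_sym[of \<nu> p q j i] A_anti[of \<nu> p q j i]) 
    finally show "?thesis i j" by simp
  qed
  then show ?thesis by (simp add: vec_eq_iff)
qed


lemma sqrt_sc: "c > 0 \<Longrightarrow> sqrt (c*x*(c*y)) = c * sqrt (x*y)"
proof -
  assume c: "c > 0"
  have "c*x*(c*y) = (c*c)*(x*y)" by algebra
  then show ?thesis using c by (simp add: real_sqrt_mult)
qed

lemma Lax_scale:
  assumes "c > 0"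
  shows "Lax \<nu> \<gamma> (c *\<^sub>R p) q z = c *\<^sub>R Lax \<nu> \<gamma> p q z"
proof -
  have T: "Tmat \<nu> (c *\<^sub>R p) q = c *\<^sub>R Tmat \<nu> p q"
    by (simp add: vec_eq_iff Tmat_def sqrt_sc[OF assms])
  have S: "Smat \<nu> (c *\<^sub>R p) q = c *\<^sub>R Smat \<nu> p q"
    by (simp add: vec_eq_iff Smat_def sqrt_sc[OF assms])
  have A: "Amat \<nu> (c *\<^sub>R p) q = c *\<^sub>R Amat \<nu> p q"
    by (simp add: vec_eq_iff Amat_def sqrt_sc[OF assms])
  show ?thesis unfolding Lax_def T S A by (simp add: scaleR_add_right mult.commute)
qed

lemma Lax_perm:
  "Lax \<nu> \<gamma> (\<chi> i. p$(\<sigma> i)) (\<chi> i. q$(\<sigma> i)) z $ i $ j = Lax \<nu> \<gamma> p q z $ (\<sigma> i) $ (\<sigma> j)"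
  by (simp add: Lax_def Tmat_def Smat_def Amat_def)


theorem mainTheorem1:
  fixes \<nu> \<gamma> :: real and p q :: "real^'n" and m :: nat
  assumes "CARD('n) \<ge> 2"
    and "\<nu> \<noteq> 0"
    and "\<gamma> \<noteq> 2" and "\<gamma> \<noteq> -2"
    and "\<forall>i. p$i > 0"
    and "inj (\<lambda>i. q$i)"
    and "m \<ge> 1"
  shows "(\<exists>P :: real poly.
            degree P = m \<and> coeff P 0 = 0
          \<and> (\<forall>z. z \<noteq> -\<gamma>/2 \<longrightarrow> tau \<nu> \<gamma> p q m z = poly P (Lam \<gamma> z))
          \<and> coeff P 1 = real m * trace ((Tmat \<nu> p q + (\<gamma>/2) *\<^sub>R Amat \<nu> p q)
                 ** matpow (Smat \<nu> p q + Amat \<nu> p q) (m - 1)))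
       \<and> (\<forall>c::real. c > 0 \<longrightarrow> (\<forall>z. z \<noteq> -\<gamma>/2 \<longrightarrow>
            tau \<nu> \<gamma> (c *\<^sub>R p) q m z = c ^ m * tau \<nu> \<gamma> p q m z))
       \<and> (\<forall>\<sigma>. \<sigma> permutes (UNIV :: 'n set) \<longrightarrow> (\<forall>z. z \<noteq> -\<gamma>/2 \<longrightarrow>
            tau \<nu> \<gamma> (\<chi> i. p$(\<sigma> i)) (\<chi> i. q$(\<sigma> i)) m z = tau \<nu> \<gamma> p q m z))"
proof -
  define T where "T = Tmat \<nu> p q"
  define S where "S = Smat \<nu> p q"
  define A where "A = Amat \<nu> p q"
  define a where "a = (\<Sum>i\<in>UNIV. fst (fab \<gamma> T S A m i i))"
  define b where "b = (\<Sum>i\<in>UNIV. snd (fab \<gamma> T S A m i i))"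
  obtain m' where m': "m = Suc m'" using assms(7) by (cases m) auto
  have trL: "trace (matpow (x *\<^sub>R T + S + \<xi> *\<^sub>R A) m) = poly a x + \<xi> * poly b x"
    if "\<xi>^2 = x^2 + \<gamma>*x + 1" for x \<xi>
    unfolding trace_def a_def b_def poly_sum fab_eval[OF that] by (simp add: sum.distrib sum_distrib_left)
  have trsym: "trace (matpow (x *\<^sub>R T + S + (-\<xi>) *\<^sub>R A) m) = trace (matpow (x *\<^sub>R T + S + \<xi> *\<^sub>R A) m)" for x \<xi>
    unfolding T_def S_def A_def by (metis L_transpose matpow_transpose trace_transpose)
  have tra: "trace (matpow (x *\<^sub>R T + S + \<xi> *\<^sub>R A) m) = poly a x \<and> \<xi> * poly b x = 0"
    if "\<xi>^2 = x^2 + \<gamma>*x + 1" for x \<xi>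
  proof -
    have "(-\<xi>)^2 = x^2 + \<gamma>*x + 1" using that by simp
    from trL[OF this] trL[OF that] trsym[of x \<xi>] show ?thesis by auto
  qed
  have b0: "b = 0"
  proof (rule ccontr)
    assume "b \<noteq> 0"
    then have fin: "finite {x. poly b x = 0}" by (rule poly_roots_finite)
    have "{\<bar>\<gamma>\<bar>+1..} \<subseteq> {x. poly b x = 0}"
    proof
      fix x assume "x \<in> {\<bar>\<gamma>\<bar>+1..}"
      then have x: "x \<ge> \<bar>\<gamma>\<bar>+1" by simp
      have "x*x \<ge> (\<bar>\<gamma>\<bar>+1)*x" using x by (intro mult_right_mono) auto
      moreover have "\<gamma>*x \<ge> -\<bar>\<gamma>\<bar>*x" using x by (intro mult_right_mono) auto
      ultimately have pos: "x^2 + \<gamma>*x + 1 > 0" using x by (simp add: power2_eq_square algebra_simps)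
      define \<xi> where "\<xi> = sqrt (x^2 + \<gamma>*x + 1)"
      have "\<xi>^2 = x^2 + \<gamma>*x + 1" "\<xi> > 0" using pos by (simp_all add: \<xi>_def)
      then show "x \<in> {x. poly b x = 0}" using tra by auto
    qed
    then have "finite {\<bar>\<gamma>\<bar>+1..}" using fin finite_subset by blast
    then show False using infinite_Ici by blast
  qed
  have trb: "trace (matpow (x *\<^sub>R T + S + \<xi> *\<^sub>R A) m) = poly a x"
    if "\<xi>^2 = x^2 + \<gamma>*x + 1" for x \<xi>
    using tra[OF that] by simp
  have c0: "coeff a 0 = 0"
  proof -
    have "coeff a 0 = trace (matpow (0 *\<^sub>R T + S + 1 *\<^sub>R A) m)"
      using trb[of 1 0] by (simp add: poly_0_coeff_0)
    also have "\<dots> = trace (matpow (S + A) (Suc m'))" by (simp add: m')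
    also have "\<dots> = 0"
    proof (rule nilp_trace[where f = "\<lambda>i. q$i"])
      fix i j assume ne: "(S + A) $ i $ j \<noteq> 0"
      show "q$j < q$i"
      proof (rule ccontr)
        assume "\<not> q$j < q$i"
        then have "q$i - q$j < 0 \<or> q$i - q$j = 0" by auto
        then have "(S + A) $ i $ j = 0" unfolding S_def A_def Smat_def Amat_def by auto
        then show False using ne by simp
      qed
    qed
    finally show ?thesis .
  qed
  have c1: "coeff a 1 = real m * trace ((T + (\<gamma>/2) *\<^sub>R A) ** matpow (S + A) (m - 1))"
  proof -
    have "coeff a 1 = (\<Sum>i\<in>UNIV. U1 (S + A) (T + (\<gamma>/2) *\<^sub>R A) m $ i $ i)
       - coeff b (Suc 0) - \<gamma>/2 * coeff b 0"
      unfolding a_def b_def coeff_sum fab_c1[symmetric]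
      by (simp add: sum.distrib sum_subtractf sum_distrib_left)
    also have "\<dots> = trace (matpow (S + A) 0 ** U1 (S + A) (T + (\<gamma>/2) *\<^sub>R A) m)"
      by (simp add: b0 trace_def)
    also have "\<dots> = real m * trace ((T + (\<gamma>/2) *\<^sub>R A) ** matpow (S + A) (m - 1))"
      using U1_trace[of "S + A" 0 "T + (\<gamma>/2) *\<^sub>R A" m] by simp
    finally show ?thesis .
  qed
  have sp: "(\<Sum>i\<in>UNIV. p$i) > 0"
    by (rule sum_pos) (use assms(5) in auto)
  have cm: "coeff a m = (\<Sum>i\<in>UNIV. p$i) ^ m"
  proof -
    have "coeff a m = (\<Sum>i\<in>UNIV. matpow (T + A) m $ i $ i - coeff (snd (fab \<gamma> T S A m i i)) m')"
      unfolding a_def coeff_sum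
      by (rule sum.cong[OF refl]) (metis fab_deg add_diff_cancel_right' coeff_pCons_Suc m')
    also have "\<dots> = trace (matpow (T + A) m) - coeff b m'"
      by (simp add: b_def coeff_sum sum_subtractf trace_def)
    also have "\<dots> = trace (matpow (T + A) (Suc m'))" by (simp add: b0 m')
    also have "\<dots> = (\<Sum>l\<in>UNIV. (sqrt (p$l) * exp (-(\<nu>/2*q$l))) * (sqrt (p$l) * exp (\<nu>/2*q$l))) ^ Suc m'"
    proof (rule rank1_trace)
      fix i j
      have "exp (\<nu>/2*(q$i - q$j)) = exp (\<nu>/2*q$i) * exp (-(\<nu>/2*q$j))"
        by (simp add: exp_add[symmetric] algebra_simps)
      then show "(T + A) $ i $ j = (sqrt (p$i) * exp (\<nu>/2*q$i)) * (sqrt (p$j) * exp (-(\<nu>/2*q$j)))"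
        unfolding T_def A_def Tmat_def Amat_def
        by (simp add: real_sqrt_mult distrib_left[symmetric] cosh_plus_sinh mult_ac)
    qed
    also have "\<dots> = (\<Sum>i\<in>UNIV. p$i) ^ m"
    proof -
      have "(sqrt (p$l) * exp (-(\<nu>/2*q$l))) * (sqrt (p$l) * exp (\<nu>/2*q$l)) = p$l" for l
      proof -
        have "(sqrt (p$l) * exp (-(\<nu>/2*q$l))) * (sqrt (p$l) * exp (\<nu>/2*q$l))
           = (sqrt (p$l) * sqrt (p$l)) * (exp (\<nu>/2*q$l) * exp (-(\<nu>/2*q$l)))" by (simp only: mult_ac)
        then show ?thesis using assms(5)[rule_format, of l] by (simp add: exp_minus_inverse)
      qed
      then show ?thesis by (simp add: m')
    qed
    finally show ?thesis .
  qed
  have degle: "degree a \<le> m"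
    by (rule degree_le) (simp add: a_def coeff_sum fab_deg)
  have "coeff a m \<noteq> 0" using cm sp by simp
  then have dega: "degree a = m" using degle le_degree by (metis antisym)
  have part1: "\<exists>P :: real poly.
            degree P = m \<and> coeff P 0 = 0
          \<and> (\<forall>z. z \<noteq> -\<gamma>/2 \<longrightarrow> tau \<nu> \<gamma> p q m z = poly P (Lam \<gamma> z))
          \<and> coeff P 1 = real m * trace ((Tmat \<nu> p q + (\<gamma>/2) *\<^sub>R Amat \<nu> p q)
                 ** matpow (Smat \<nu> p q + Amat \<nu> p q) (m - 1))"
  proof (intro exI conjI allI impI)
    show "degree a = m" by (rule dega)
    show "coeff a 0 = 0" by (rule c0)
    show "coeff a 1 = real m * trace ((Tmat \<nu> p q + (\<gamma>/2) *\<^sub>R Amat \<nu> p q)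
                 ** matpow (Smat \<nu> p q + Amat \<nu> p q) (m - 1))"
      using c1 by (simp add: T_def S_def A_def)
    fix z assume z: "z \<noteq> -\<gamma>/2"
    show "tau \<nu> \<gamma> p q m z = poly a (Lam \<gamma> z)"
      unfolding tau_def Lax_def using trb[OF Xi_sq[OF z]] by (simp add: T_def S_def A_def)
  qed
  have part2: "\<forall>c::real. c > 0 \<longrightarrow> (\<forall>z. z \<noteq> -\<gamma>/2 \<longrightarrow>
            tau \<nu> \<gamma> (c *\<^sub>R p) q m z = c ^ m * tau \<nu> \<gamma> p q m z)"
    by (simp add: tau_def Lax_scale matpow_scaleR trace_scaleR)
  have part3: "\<forall>\<sigma>. \<sigma> permutes (UNIV :: 'n set) \<longrightarrow> (\<forall>z. z \<noteq> -\<gamma>/2 \<longrightarrow>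
            tau \<nu> \<gamma> (\<chi> i. p$(\<sigma> i)) (\<chi> i. q$(\<sigma> i)) m z = tau \<nu> \<gamma> p q m z)"
    by (auto simp: tau_def intro: perm_trace Lax_perm)
  show ?thesis using part1 part2 part3 by blast
qed

end
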